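(* Let $d\ge1$ and let $\{N_i(t_i),\ t_i\ge0\}$, $i=1,\dots,d$, be independent one-parameter counting processes. Define $\mathcal{N}(\mathbf{t})=N_1(t_1)+N_2(t_2)+\dots+N_d(t_d)$ for $\mathbf{t}=(t_1,\dots,t_d)\in\mathbb{R}^d_+$. Let $\boldsymbol{\Lambda}=(\lambda_1,\dots,\lambda_d)$ with all $\lambda_i>0$. Then $\{\mathcal{N}(\mathbf{t}),\ \mathbf{t}\in\mathbb{R}^d_+\}$ is a $d$-parameter Poisson process with transition parameter $\boldsymbol{\Lambda}$ if and only if, for each $i=1,\dots,d$, $\{N_i(t_i),\ t_i\ge0\}$ is a Poisson process with transition rate $\lambda_i$.
   Context: A one-parameter counting process is a nonnegative-integer-valued process $N$ with $N(0)=0$ and nondecreasing paths. On $\mathbb{R}^d_+$ use the componentwise partial order: $\mathbf{s}\preceq\mathbf{t}$ iff $s_i\le t_i$ for all $i$; $\mathbf{s}\prec\mathbf{t}$ denotes the strict relation; differences are componentwise and $\boldsymbol{\Lambda}\cdot\mathbf{t}=\sum_i\lambda_it_i$. A multiparameter counting process is a nonnegative-integer-valued random field $\{\mathcal{N}(\mathbf{t}),\mathbf{t}\in\mathbb{R}^d_+\}$ with $\mathcal{N}(\mathbf{0})=0$ and $\mathcal{N}(\mathbf{s})\le\mathcal{N}(\mathbf{t})$ whenever $\mathbf{s}\preceq\mathbf{t}$. A multiparameter (d-parameter) Poisson process (MPP) with transition parameter $\boldsymbol{\Lambda}=(\lambda_1,\dots,\lambda_d)$, $\lambda_i>0$, is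 a multiparameter counting process such that (i) for any $\mathbf{0}=\mathbf{t}^{(0)}\prec\mathbf{t}^{(1)}\prec\dots\prec\mathbf{t}^{(m)}$ the increments $\mathcal{N}(\mathbf{t}^{(k)})-\mathcal{N}(\mathbf{t}^{(k-1)})$, $k=1,\dots,m$, are independent; (ii) for $\mathbf{s}\preceq\mathbf{t}$, $\mathcal{N}(\mathbf{t})-\mathcal{N}(\mathbf{s})$ has the same distribution as $\mathcal{N}(\mathbf{t}-\mathbf{s})$; (iii) for each $\mathbf{t}$, $\mathcal{N}(\mathbf{t})$ is Poisson with mean $\boldsymbol{\Lambda}\cdot\mathbf{t}$. *)

theory Defs
  imports "HOL-Probability.Probability"
begin

(* Points of R^d_+ are represented as functions nat => real; only coordinates i < d matter. *)

definition vle :: "nat \<Rightarrow> (nat \<Rightarrow> real) \<Rightarrow> (nat \<Rightarrow> real) \<Rightarrow> bool" where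
  "vle d s t \<longleftrightarrow> (\<forall>i<d. s i \<le> t i)"

definition vlt :: "nat \<Rightarrow> (nat \<Rightarrow> real) \<Rightarrow> (nat \<Rightarrow> real) \<Rightarrow> bool" where
  "vlt d s t \<longleftrightarrow> vle d s t \<and> \<not> vle d t s"

definition vdot :: "nat \<Rightarrow> (nat \<Rightarrow> real) \<Rightarrow> (nat \<Rightarrow> real) \<Rightarrow> real" where
  "vdot d L t = (\<Sum>i<d. L i * t i)"

definition poisson_rv :: "'a measure \<Rightarrow> ('a \<Rightarrow> nat) \<Rightarrow> real \<Rightarrow> bool" where
  "poisson_rv M X mu \<longleftrightarrow> X \<in> measurable M (count_space UNIV) \<and>
     (\<forall>k::nat. measure M {\<omega> \<in> space M. X \<omega> = k} = exp (- mu) * mu ^ k / fact k)"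

definition counting_process :: "'a measure \<Rightarrow> (real \<Rightarrow> 'a \<Rightarrow> nat) \<Rightarrow> bool" where
  "counting_process M N \<longleftrightarrow> (\<forall>\<omega>\<in>space M. N 0 \<omega> = 0 \<and>
     (\<forall>s t. 0 \<le> s \<longrightarrow> s \<le> t \<longrightarrow> N s \<omega> \<le> N t \<omega>))"

definition poisson_process :: "'a measure \<Rightarrow> real \<Rightarrow> (real \<Rightarrow> 'a \<Rightarrow> nat) \<Rightarrow> bool" where
  "poisson_process M lam N \<longleftrightarrow> counting_process M N \<and>
     (\<forall>(m::nat) (t::nat \<Rightarrow> real). t 0 = 0 \<and> (\<forall>k\<in>{1..m}. t (k - 1) < t k) \<longrightarrow>
        prob_space.indep_vars M (\<lambda>_. count_space UNIV)
          (\<lambda>k \<omega>. N (t k) \<omega> - N (t (k - 1)) \<omega>) {1..m}) \<and>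
     (\<forall>s t. 0 \<le> s \<longrightarrow> s \<le> t \<longrightarrow>
        distr M (count_space UNIV) (\<lambda>\<omega>. N t \<omega> - N s \<omega>) =
        distr M (count_space UNIV) (N (t - s))) \<and>
     (\<forall>t\<ge>0. poisson_rv M (N t) (lam * t))"

definition mcounting_process :: "nat \<Rightarrow> 'a measure \<Rightarrow> ((nat \<Rightarrow> real) \<Rightarrow> 'a \<Rightarrow> nat) \<Rightarrow> bool" where
  "mcounting_process d M X \<longleftrightarrow> (\<forall>\<omega>\<in>space M. X (\<lambda>_. 0) \<omega> = 0 \<and>
     (\<forall>s t. vle d (\<lambda>_. 0) s \<longrightarrow> vle d s t \<longrightarrow> X s \<omega> \<le> X t \<omega>))"

definition mpp :: "nat \<Rightarrow> 'a measure \<Rightarrow> (nat \<Rightarrow> real) \<Rightarrow> ((nat \<Rightarrow> real) \<Rightarrow> 'a \<Rightarrow> nat) \<Rightarrow> bool" where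
  "mpp d M L X \<longleftrightarrow> mcounting_process d M X \<and>
     (\<forall>(m::nat) (t::nat \<Rightarrow> nat \<Rightarrow> real). t 0 = (\<lambda>_. 0) \<and> (\<forall>k\<in>{1..m}. vlt d (t (k - 1)) (t k)) \<longrightarrow>
        prob_space.indep_vars M (\<lambda>_. count_space UNIV)
          (\<lambda>k \<omega>. X (t k) \<omega> - X (t (k - 1)) \<omega>) {1..m}) \<and>
     (\<forall>s t. vle d (\<lambda>_. 0) s \<longrightarrow> vle d s t \<longrightarrow>
        distr M (count_space UNIV) (\<lambda>\<omega>. X t \<omega> - X s \<omega>) =
        distr M (count_space UNIV) (X (\<lambda>i. t i - s i))) \<and>
     (\<forall>t. vle d (\<lambda>_. 0) t \<longrightarrow> poisson_rv M (X t) (vdot d L t))"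

end

theory Submission
  imports Defs
begin

lemma (in prob_space) indep_vars_cong_space:
  assumes "indep_vars M' X I" "\<And>i \<omega>. i \<in> I \<Longrightarrow> \<omega> \<in> space M \<Longrightarrow> X i \<omega> = Y i \<omega>"
  shows "indep_vars M' Y I"
proof -
  have eq: "{X i -` A \<inter> space M |A. A \<in> sets (M' i)} = {Y i -` A \<inter> space M |A. A \<in> sets (M' i)}"
    if "i \<in> I" for i
  proof -
    have "X i -` A \<inter> space M = Y i -` A \<inter> space M" for A using assms(2)[OF that] by auto
    then show ?thesis by simp
  qed
  have m: "X i \<in> measurable M (M' i) \<longleftrightarrow> Y i \<in> measurable M (M' i)" if "i \<in> I" for i
    using assms(2)[OF that] by (intro measurable_cong) auto
  show ?thesis using assms(1) unfolding indep_vars_def2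
    using eq m by (simp cong: indep_sets_cong)
qed

lemma (in prob_space) indep_vars_from_fact:
  fixes Y :: "'k \<Rightarrow> 'a \<Rightarrow> nat"
  assumes K: "finite K" and meas: "\<And>k. k \<in> K \<Longrightarrow> Y k \<in> measurable M (count_space UNIV)"
    and fact: "\<And>A. prob {\<omega>\<in>space M. \<forall>k\<in>K. Y k \<omega> \<in> A k} = (\<Prod>k\<in>K. prob {\<omega>\<in>space M. Y k \<omega> \<in> A k})"
  shows "indep_vars (\<lambda>_. count_space UNIV) Y K"
proof (cases "K = {}")
  case True
  then show ?thesis unfolding indep_vars_def2 indep_sets_def by auto
next
  case False
  have "indep_vars (\<lambda>_. count_space UNIV) Y K \<longleftrightarrow>
    (\<forall>A\<in>(\<Pi> i\<in>K. UNIV). prob (\<Inter>j\<in>K. Y j -` A j \<inter> space M) = (\<Prod>j\<in>K. prob (Y j -` A j \<inter> space M)))"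
    by (rule indep_vars_finite[OF False K]) (auto simp: meas Int_stable_def)
  moreover have "prob (\<Inter>j\<in>K. Y j -` A j \<inter> space M) = (\<Prod>j\<in>K. prob (Y j -` A j \<inter> space M))" for A
  proof -
    have "(\<Inter>j\<in>K. Y j -` A j \<inter> space M) = {\<omega>\<in>space M. \<forall>k\<in>K. Y k \<omega> \<in> A k}" using False by auto
    moreover have "Y j -` A j \<inter> space M = {\<omega>\<in>space M. Y j \<omega> \<in> A j}" for j by auto
    ultimately show ?thesis using fact by simp
  qed
  ultimately show ?thesis by simp
qed

lemma (in prob_space) indep_vars_group_sum:
  fixes D :: "'p \<Rightarrow> 'a \<Rightarrow> nat"
  assumes ind: "indep_vars (\<lambda>_. count_space UNIV) D P"
    and G: "\<And>k. k \<in> L \<Longrightarrow> G k \<subseteq> P" "\<And>k. k \<in> L \<Longrightarrow> finite (G k)"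
    and disj: "disjoint_family_on G L"
  shows "indep_vars (\<lambda>_. count_space UNIV) (\<lambda>k \<omega>. \<Sum>p\<in>G k. D p \<omega>) L"
proof -
  have "indep_vars (\<lambda>j. Pi\<^sub>M (G j) (\<lambda>_. count_space UNIV)) (\<lambda>j \<omega>. restrict (\<lambda>i. D i \<omega>) (G j)) L"
    by (rule indep_vars_restrict[OF ind G(1) disj])
  then have "indep_vars (\<lambda>_. count_space UNIV) (\<lambda>j \<omega>. (\<lambda>x. \<Sum>p\<in>G j. x p) (restrict (\<lambda>i. D i \<omega>) (G j))) L"
    by (rule indep_vars_compose2) (use G(2) in measurable)
  then show ?thesis
    by (rule indep_vars_cong_space) simp
qed

lemma poisson_rv_cong:
  assumes "poisson_rv M X mu" "\<And>\<omega>. \<omega> \<in> space M \<Longrightarrow> X \<omega> = Y \<omega>"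
  shows "poisson_rv M Y mu"
proof -
  have "{\<omega> \<in> space M. X \<omega> = k} = {\<omega> \<in> space M. Y \<omega> = k}" for k using assms(2) by auto
  moreover have "X \<in> measurable M (count_space UNIV) \<longleftrightarrow> Y \<in> measurable M (count_space UNIV)"
    using assms(2) by (intro measurable_cong) auto
  ultimately show ?thesis using assms(1) unfolding poisson_rv_def by simp
qed

lemma (in prob_space) poisson_distr_eq:
  assumes "poisson_rv M X mu" "poisson_rv M Y mu"
  shows "distr M (count_space UNIV) X = distr M (count_space UNIV) Y"
proof (rule measure_eqI_countable[where A=UNIV])
  fix a :: nat
  have mX: "X \<in> measurable M (count_space UNIV)" and mY: "Y \<in> measurable M (count_space UNIV)"
    using assms unfolding poisson_rv_def by auto
  have "emeasure (distr M (count_space UNIV) X) {a} = emeasure M {\<omega>\<in>space M. X \<omega> = a}"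
    using mX by (subst emeasure_distr) (auto intro!: arg_cong[where f="emeasure M"])
  also have "\<dots> = ennreal (prob {\<omega>\<in>space M. X \<omega> = a})" by (simp add: emeasure_eq_measure)
  also have "\<dots> = ennreal (prob {\<omega>\<in>space M. Y \<omega> = a})" using assms unfolding poisson_rv_def by simp
  also have "\<dots> = emeasure M {\<omega>\<in>space M. Y \<omega> = a}" by (simp add: emeasure_eq_measure)
  also have "\<dots> = emeasure (distr M (count_space UNIV) Y) {a}"
    using mY by (subst emeasure_distr) (auto intro!: arg_cong[where f="emeasure M"])
  finally show "emeasure (distr M (count_space UNIV) X) {a} = emeasure (distr M (count_space UNIV) Y) {a}" .
qed auto

lemma (in prob_space) poisson_distr_transfer:
  assumes "poisson_rv M Y mu" "X \<in> measurable M (count_space UNIV)"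
    and "distr M (count_space UNIV) X = distr M (count_space UNIV) Y"
  shows "poisson_rv M X mu"
  unfolding poisson_rv_def
proof (intro conjI allI assms(2))
  fix k :: nat
  have mY: "Y \<in> measurable M (count_space UNIV)" using assms unfolding poisson_rv_def by auto
  have "prob {\<omega>\<in>space M. X \<omega> = k} = measure (distr M (count_space UNIV) X) {k}"
    using assms(2) by (subst measure_distr) (auto intro!: arg_cong[where f="measure M"])
  also have "\<dots> = measure (distr M (count_space UNIV) Y) {k}" using assms(3) by simp
  also have "\<dots> = prob {\<omega>\<in>space M. Y \<omega> = k}"
    using mY by (subst measure_distr) (auto intro!: arg_cong[where f="measure M"])
  finally show "prob {\<omega>\<in>space M. X \<omega> = k} = exp (- mu) * mu ^ k / fact k"
    using assms(1) unfolding poisson_rv_def by simp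
qed


lemma poisson_conv_identity:
  fixes a b :: real
  shows "(\<Sum>k\<le>n. (exp (- a) * a ^ k / fact k) * (exp (- b) * b ^ (n - k) / fact (n - k)))
         = exp (- (a + b)) * (a + b) ^ n / fact n"
proof -
  have "exp (- (a + b)) * (a + b) ^ n / fact n
      = (\<Sum>k\<le>n. exp (- (a + b)) / fact n * (of_nat (n choose k) * a ^ k * b ^ (n - k)))"
    by (simp add: binomial_ring sum_distrib_left sum_divide_distrib)
  also have "\<dots> = (\<Sum>k\<le>n. (exp (- a) * a ^ k / fact k) * (exp (- b) * b ^ (n - k) / fact (n - k)))"
  proof (rule sum.cong[OF refl])
    fix k assume "k \<in> {..n}"
    then have "k \<le> n" by simp
    then show "exp (- (a + b)) / fact n * (of_nat (n choose k) * a ^ k * b ^ (n - k))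
        = (exp (- a) * a ^ k / fact k) * (exp (- b) * b ^ (n - k) / fact (n - k))"
      by (simp add: binomial_fact exp_add[symmetric] field_simps)
  qed
  finally show ?thesis by simp
qed

lemma (in prob_space) poisson_add:
  assumes X: "poisson_rv M X a" and Y: "poisson_rv M Y b"
    and ind: "\<And>k l. prob {\<omega>\<in>space M. X \<omega> = k \<and> Y \<omega> = l} = prob {\<omega>\<in>space M. X \<omega> = k} * prob {\<omega>\<in>space M. Y \<omega> = l}"
  shows "poisson_rv M (\<lambda>\<omega>. X \<omega> + Y \<omega>) (a + b)"
  unfolding poisson_rv_def
proof (intro conjI allI)
  have mX: "X \<in> measurable M (count_space UNIV)" and mY: "Y \<in> measurable M (count_space UNIV)"
    using X Y unfolding poisson_rv_def by auto
  show "(\<lambda>\<omega>. X \<omega> + Y \<omega>) \<in> measurable M (count_space UNIV)" using mX mY by measurable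
  fix n :: nat
  have "{\<omega>\<in>space M. X \<omega> + Y \<omega> = n} = (\<Union>k\<in>{..n}. {\<omega>\<in>space M. X \<omega> = k \<and> Y \<omega> = n - k})"
    by auto
  then have "prob {\<omega>\<in>space M. X \<omega> + Y \<omega> = n} = (\<Sum>k\<le>n. prob {\<omega>\<in>space M. X \<omega> = k \<and> Y \<omega> = n - k})"
    using mX mY by (simp, intro finite_measure_finite_Union) (auto simp: disjoint_family_on_def)
  also have "\<dots> = (\<Sum>k\<le>n. (exp (- a) * a ^ k / fact k) * (exp (- b) * b ^ (n - k) / fact (n - k)))"
    using X Y by (simp add: ind poisson_rv_def)
  also have "\<dots> = exp (- (a + b)) * (a + b) ^ n / fact n" by (rule poisson_conv_identity)
  finally show "prob {\<omega>\<in>space M. X \<omega> + Y \<omega> = n} = exp (- (a + b)) * (a + b) ^ n / fact n" .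
qed

lemma (in prob_space) poisson_sum:
  fixes Z :: "'i \<Rightarrow> 'a \<Rightarrow> nat"
  assumes "finite F" "indep_vars (\<lambda>_. count_space UNIV) Z F" "\<And>i. i \<in> F \<Longrightarrow> poisson_rv M (Z i) (mu i)"
  shows "poisson_rv M (\<lambda>\<omega>. \<Sum>i\<in>F. Z i \<omega>) (\<Sum>i\<in>F. mu i)"
  using assms
proof (induction F rule: finite_induct)
  case empty
  have "prob {\<omega> \<in> space M. 0 = k} = exp (- 0) * 0 ^ k / fact k" for k :: nat
    by (cases k) (auto simp: prob_space)
  then show ?case unfolding poisson_rv_def by simp
next
  case (insert j F)
  have IH: "poisson_rv M (\<lambda>\<omega>. \<Sum>i\<in>F. Z i \<omega>) (\<Sum>i\<in>F. mu i)"
    using insert by (intro insert.IH indep_vars_subset[OF insert.prems(1)]) auto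
  let ?G = "\<lambda>b::bool. if b then {j} else F"
  have "indep_vars (\<lambda>_. count_space UNIV) (\<lambda>b \<omega>. \<Sum>p\<in>?G b. Z p \<omega>) UNIV"
    using insert by (intro indep_vars_group_sum[OF insert.prems(1)]) (auto simp: disjoint_family_on_def)
  then have "prob (\<Inter>b\<in>UNIV. (\<lambda>\<omega>. \<Sum>p\<in>?G b. Z p \<omega>) -` (if b then {k} else {l}) \<inter> space M)
      = (\<Prod>b\<in>UNIV. prob ((\<lambda>\<omega>. \<Sum>p\<in>?G b. Z p \<omega>) -` (if b then {k} else {l}) \<inter> space M))" for k l
    by (rule indep_varsD) auto
  then have ind: "prob {\<omega>\<in>space M. Z j \<omega> = k \<and> (\<Sum>i\<in>F. Z i \<omega>) = l}
      = prob {\<omega>\<in>space M. Z j \<omega> = k} * prob {\<omega>\<in>space M. (\<Sum>i\<in>F. Z i \<omega>) = l}" for k l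
  proof -
    assume h: "\<And>k l. prob (\<Inter>b\<in>UNIV. (\<lambda>\<omega>. \<Sum>p\<in>?G b. Z p \<omega>) -` (if b then {k} else {l}) \<inter> space M)
      = (\<Prod>b\<in>UNIV. prob ((\<lambda>\<omega>. \<Sum>p\<in>?G b. Z p \<omega>) -` (if b then {k} else {l}) \<inter> space M))"
    have e1: "(\<Inter>b\<in>UNIV. (\<lambda>\<omega>. \<Sum>p\<in>?G b. Z p \<omega>) -` (if b then {k} else {l}) \<inter> space M)
       = {\<omega>\<in>space M. Z j \<omega> = k \<and> (\<Sum>i\<in>F. Z i \<omega>) = l}"
      by (auto simp: UNIV_bool)
    have e2: "(\<Prod>b\<in>UNIV. prob ((\<lambda>\<omega>. \<Sum>p\<in>?G b. Z p \<omega>) -` (if b then {k} else {l}) \<inter> space M))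
       = prob {\<omega>\<in>space M. Z j \<omega> = k} * prob {\<omega>\<in>space M. (\<Sum>i\<in>F. Z i \<omega>) = l}"
      by (simp add: UNIV_bool vimage_def Int_def conj_commute)
    show ?thesis using h[of k l] e1 e2 by simp
  qed
  have "poisson_rv M (\<lambda>\<omega>. Z j \<omega> + (\<Sum>i\<in>F. Z i \<omega>)) (mu j + (\<Sum>i\<in>F. mu i))"
    by (rule poisson_add[OF insert.prems(2)[of j] IH]) (use ind in auto)
  then show ?case using insert by simp
qed


lemma (in prob_space) pp_incr_fact:
  fixes m :: nat and t :: "nat \<Rightarrow> real" and A :: "nat \<Rightarrow> nat set"
  assumes pp: "poisson_process M lam N"
  shows "t 0 = 0 \<Longrightarrow> (\<forall>k\<in>{1..m}. t (k - 1) \<le> t k) \<Longrightarrow>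
    prob {\<omega>\<in>space M. \<forall>k\<in>{1..m}. N (t k) \<omega> - N (t (k - 1)) \<omega> \<in> A k}
    = (\<Prod>k\<in>{1..m}. prob {\<omega>\<in>space M. N (t k) \<omega> - N (t (k - 1)) \<omega> \<in> A k})"
proof (induction m arbitrary: t A)
  case 0
  then show ?case by (simp add: prob_space)
next
  case (Suc m)
  show ?case
  proof (cases "\<forall>k\<in>{1..Suc m}. t (k - 1) < t k")
    case True
    have ind: "indep_vars (\<lambda>_. count_space UNIV) (\<lambda>k \<omega>. N (t k) \<omega> - N (t (k - 1)) \<omega>) {1..Suc m}"
      using pp Suc.prems True unfolding poisson_process_def by blast
    have "prob (\<Inter>k\<in>{1..Suc m}. (\<lambda>\<omega>. N (t k) \<omega> - N (t (k - 1)) \<omega>) -` A k \<inter> space M)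
        = (\<Prod>k\<in>{1..Suc m}. prob ((\<lambda>\<omega>. N (t k) \<omega> - N (t (k - 1)) \<omega>) -` A k \<inter> space M))"
      by (rule indep_varsD[OF ind]) auto
    moreover have e2: "(\<Inter>k\<in>{1..Suc m}. (\<lambda>\<omega>. N (t k) \<omega> - N (t (k - 1)) \<omega>) -` A k \<inter> space M)
        = {\<omega>\<in>space M. \<forall>k\<in>{1..Suc m}. N (t k) \<omega> - N (t (k - 1)) \<omega> \<in> A k}" by auto
    moreover have e3: "\<And>k. (\<lambda>\<omega>. N (t k) \<omega> - N (t (k - 1)) \<omega>) -` A k \<inter> space M
        = {\<omega>\<in>space M. N (t k) \<omega> - N (t (k - 1)) \<omega> \<in> A k}" by auto
    ultimately show ?thesis by (simp only: e2 e3)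
  next
    case False
    then obtain j where j: "j \<in> {1..Suc m}" "\<not> t (j - 1) < t j" by blast
    with Suc.prems have tj: "t (j - 1) = t j" by fastforce
    define \<sigma> where "\<sigma> = (\<lambda>k::nat. if k < j then k else Suc k)"
    define t' where "t' = t \<circ> \<sigma>"
    define A' where "A' = A \<circ> \<sigma>"
    have j1: "1 \<le> j" "j \<le> Suc m" using j by auto
    have key: "t (\<sigma> (k - 1)) = t (\<sigma> k - 1)" if "k \<in> {1..m}" for k
      using that tj j1 unfolding \<sigma>_def
      by (cases "k < j"; cases "k = j") (auto simp: not_less)
    have t'0: "t' 0 = 0" using j1 Suc.prems(1) by (simp add: t'_def \<sigma>_def)
    have sig_range: "\<sigma> k \<in> {1..Suc m}" if "k \<in> {1..m}" for k using that by (auto simp: \<sigma>_def)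
    have chain': "\<forall>k\<in>{1..m}. t' (k - 1) \<le> t' k"
    proof
      fix k assume k: "k \<in> {1..m}"
      have "t' (k - 1) = t (\<sigma> k - 1)" using key[OF k] by (simp add: t'_def)
      also have "\<dots> \<le> t (\<sigma> k)" using Suc.prems(2) sig_range[OF k] by blast
      finally show "t' (k - 1) \<le> t' k" by (simp add: t'_def)
    qed
    note IH = Suc.IH[OF t'0 chain', of A']
    have Dk: "N (t' k) \<omega> - N (t' (k - 1)) \<omega> = N (t (\<sigma> k)) \<omega> - N (t (\<sigma> k - 1)) \<omega>" if "k \<in> {1..m}" for k \<omega>
      using key[OF that] by (simp add: t'_def)
    have inj: "inj_on \<sigma> {1..m}" by (auto simp: inj_on_def \<sigma>_def split: if_splits)
    have img: "\<sigma> ` {1..m} = {1..Suc m} - {j}"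
    proof
      show "\<sigma> ` {1..m} \<subseteq> {1..Suc m} - {j}" by (auto simp: \<sigma>_def)
      show "{1..Suc m} - {j} \<subseteq> \<sigma> ` {1..m}"
      proof
        fix x assume x: "x \<in> {1..Suc m} - {j}"
        show "x \<in> \<sigma> ` {1..m}"
        proof (cases "x < j")
          case True then have "\<sigma> x = x" by (simp add: \<sigma>_def)
          moreover have "x \<in> {1..m}" using x True j1 by auto
          ultimately show ?thesis by force
        next
          case False then have "\<sigma> (x - 1) = x" "x - 1 \<in> {1..m}" using x j1 by (auto simp: \<sigma>_def)
          then show ?thesis by force
        qed
      qed
    qed
    have Dj: "N (t j) \<omega> - N (t (j - 1)) \<omega> = 0" for \<omega> using tj by simp
    let ?D = "\<lambda>k \<omega>. N (t k) \<omega> - N (t (k - 1)) \<omega>"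
    have set_eq: "{\<omega>\<in>space M. \<forall>k\<in>{1..Suc m}. ?D k \<omega> \<in> A k}
        = {\<omega>\<in>space M. 0 \<in> A j \<and> (\<forall>k\<in>{1..m}. N (t' k) \<omega> - N (t' (k - 1)) \<omega> \<in> A' k)}"
    proof -
      have "(\<forall>k\<in>{1..Suc m}. ?D k \<omega> \<in> A k) \<longleftrightarrow> ?D j \<omega> \<in> A j \<and> (\<forall>k\<in>{1..Suc m} - {j}. ?D k \<omega> \<in> A k)" for \<omega>
        using j by blast
      also have "\<dots> \<omega> \<longleftrightarrow> 0 \<in> A j \<and> (\<forall>k\<in>{1..m}. N (t' k) \<omega> - N (t' (k - 1)) \<omega> \<in> A' k)" for \<omega>
      proof -
        have "(\<forall>k\<in>{1..Suc m} - {j}. ?D k \<omega> \<in> A k) \<longleftrightarrow> (\<forall>k\<in>{1..m}. ?D (\<sigma> k) \<omega> \<in> A (\<sigma> k))"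
          unfolding img[symmetric] by auto
        also have "\<dots> \<longleftrightarrow> (\<forall>k\<in>{1..m}. N (t' k) \<omega> - N (t' (k - 1)) \<omega> \<in> A' k)"
          unfolding A'_def o_apply by (intro ball_cong refl) (simp only: Dk)
        finally show ?thesis by (simp only: Dj)
      qed
      finally show ?thesis by auto
    qed
    have "prob {\<omega>\<in>space M. \<forall>k\<in>{1..Suc m}. ?D k \<omega> \<in> A k}
       = (if 0 \<in> A j then prob {\<omega>\<in>space M. \<forall>k\<in>{1..m}. N (t' k) \<omega> - N (t' (k - 1)) \<omega> \<in> A' k} else 0)"
      unfolding set_eq by auto
    also have "\<dots> = (if 0 \<in> A j then 1 else 0) * (\<Prod>k\<in>{1..m}. prob {\<omega>\<in>space M. N (t' k) \<omega> - N (t' (k - 1)) \<omega> \<in> A' k})"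
      using IH by simp
    also have "(\<Prod>k\<in>{1..m}. prob {\<omega>\<in>space M. N (t' k) \<omega> - N (t' (k - 1)) \<omega> \<in> A' k})
        = (\<Prod>k\<in>{1..m}. prob {\<omega>\<in>space M. ?D (\<sigma> k) \<omega> \<in> A (\<sigma> k)})"
      by (intro prod.cong refl) (simp only: Dk A'_def o_apply)
    also have "\<dots> = (\<Prod>k\<in>{1..Suc m} - {j}. prob {\<omega>\<in>space M. ?D k \<omega> \<in> A k})"
      using prod.reindex[OF inj, of "\<lambda>k. prob {\<omega>\<in>space M. ?D k \<omega> \<in> A k}"] img by simp
    also have "(if 0 \<in> A j then 1 else 0) = prob {\<omega>\<in>space M. ?D j \<omega> \<in> A j}"
      by (simp only: Dj) (simp add: prob_space)
    also have "prob {\<omega>\<in>space M. ?D j \<omega> \<in> A j} * (\<Prod>k\<in>{1..Suc m} - {j}. prob {\<omega>\<in>space M. ?D k \<omega> \<in> A k})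
        = (\<Prod>k\<in>{1..Suc m}. prob {\<omega>\<in>space M. ?D k \<omega> \<in> A k})"
      using prod.remove[of "{1..Suc m}" j "\<lambda>k. prob {\<omega>\<in>space M. ?D k \<omega> \<in> A k}"] j(1) by simp
    finally show ?thesis .
  qed
qed

lemma pp_distr:
  assumes "poisson_process M lam N" "0 \<le> s" "s \<le> t"
  shows "distr M (count_space UNIV) (\<lambda>\<omega>. N t \<omega> - N s \<omega>) = distr M (count_space UNIV) (N (t - s))"
  using assms unfolding poisson_process_def by blast

lemma pp_poisson:
  assumes "poisson_process M lam N" "0 \<le> t"
  shows "poisson_rv M (N t) (lam * t)"
  using assms unfolding poisson_process_def by blast


theorem mainTheorem1:
  fixes M :: "'a measure" and d :: nat and N :: "nat \<Rightarrow> real \<Rightarrow> 'a \<Rightarrow> nat"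
    and L :: "nat \<Rightarrow> real"
  assumes "prob_space M"
    and "d \<ge> 1"
    and "\<forall>i<d. counting_process M (N i)"
    and "prob_space.indep_vars M (\<lambda>_. Pi\<^sub>M {0..} (\<lambda>_. count_space UNIV))
           (\<lambda>i \<omega>. restrict (\<lambda>t. N i t \<omega>) {0..}) {..<d}"
    and "\<forall>i<d. L i > 0"
  shows "mpp d M L (\<lambda>t \<omega>. \<Sum>i<d. N i (t i) \<omega>) \<longleftrightarrow> (\<forall>i<d. poisson_process M (L i) (N i))"
proof -
  interpret prob_space M by (rule assms(1))
  note ind = assms(4)
  have N0: "\<And>i \<omega>. i < d \<Longrightarrow> \<omega> \<in> space M \<Longrightarrow> N i 0 \<omega> = 0"
    and Nmono: "\<And>i \<omega> s t. i < d \<Longrightarrow> \<omega> \<in> space M \<Longrightarrow> 0 \<le> s \<Longrightarrow> s \<le> t \<Longrightarrow> N i s \<omega> \<le> N i t \<omega>"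
    using assms(3) by (auto simp: counting_process_def)
  have single: "(\<Sum>j<d. N j (if j = i then r else 0) \<omega>) = N i r \<omega>" if "i < d" "\<omega> \<in> space M" for i r \<omega>
  proof -
    have "(\<Sum>j<d. N j (if j = i then r else 0) \<omega>) = (\<Sum>j<d. if j = i then N i r \<omega> else 0)"
      using N0 that(2) by (intro sum.cong) auto
    also have "\<dots> = N i r \<omega>" using that(1) by simp
    finally show ?thesis .
  qed
  have evalind: "indep_vars (\<lambda>_. count_space UNIV) (\<lambda>i \<omega>. N i (a i) \<omega> - N i (b i) \<omega>) {..<d}"
    if ab: "\<And>i. i < d \<Longrightarrow> 0 \<le> a i" "\<And>i. i < d \<Longrightarrow> 0 \<le> b i" for a b
  proof -
    have "indep_vars (\<lambda>_. count_space UNIV)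
        (\<lambda>i \<omega>. (\<lambda>x. x (a i) - x (b i)) (restrict (\<lambda>t. N i t \<omega>) {0..})) {..<d}"
    proof (rule indep_vars_compose2[OF ind])
      fix i assume "i \<in> {..<d}"
      then have [measurable]: "a i \<in> {0::real..}" "b i \<in> {0::real..}" using ab by auto
      show "(\<lambda>x. x (a i) - x (b i)) \<in> measurable (Pi\<^sub>M {0::real..} (\<lambda>_. count_space (UNIV::nat set))) (count_space UNIV)"
        by measurable
    qed
    then show ?thesis by (rule indep_vars_cong_space) (use ab in simp)
  qed
  show ?thesis
  proof
    assume H: "mpp d M L (\<lambda>t \<omega>. \<Sum>i<d. N i (t i) \<omega>)"
    show "\<forall>i<d. poisson_process M (L i) (N i)"
    proof (intro allI impI)
      fix i assume i: "i < d"
      define T where "T = (\<lambda>r::real. \<lambda>j::nat. if j = i then r else 0)"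
      have XT: "(\<Sum>j<d. N j (T r j) \<omega>) = N i r \<omega>" if "\<omega> \<in> space M" for r \<omega>
        unfolding T_def using single[OF i that] .
      have vleT: "vle d (T r) (T s) \<longleftrightarrow> r \<le> s" for r s
        using i by (auto simp: vle_def T_def)
      have T0: "T 0 = (\<lambda>_. 0)" by (auto simp: T_def)
      show "poisson_process M (L i) (N i)"
        unfolding poisson_process_def
      proof (intro conjI allI impI)
        show "counting_process M (N i)" using assms(3) i by auto
      next
        fix m :: nat and t :: "nat \<Rightarrow> real"
        assume t: "t 0 = 0 \<and> (\<forall>k\<in>{1..m}. t (k - 1) < t k)"
        have "indep_vars (\<lambda>_. count_space UNIV)
          (\<lambda>k \<omega>. (\<Sum>j<d. N j (T (t k) j) \<omega>) - (\<Sum>j<d. N j (T (t (k - 1)) j) \<omega>)) {1..m}"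
        proof -
          have c1: "(T \<circ> t) 0 = (\<lambda>_. 0)" using t T0 by simp
          have c2: "\<forall>k\<in>{1..m}. vlt d ((T \<circ> t) (k - 1)) ((T \<circ> t) k)"
            using t by (auto simp: vlt_def vleT)
          have H2: "\<forall>(m::nat) (t::nat \<Rightarrow> nat \<Rightarrow> real). t 0 = (\<lambda>_. 0) \<and> (\<forall>k\<in>{1..m}. vlt d (t (k - 1)) (t k)) \<longrightarrow>
            indep_vars (\<lambda>_. count_space UNIV)
             (\<lambda>k \<omega>. (\<Sum>i<d. N i (t k i) \<omega>) - (\<Sum>i<d. N i (t (k - 1) i) \<omega>)) {1..m}"
            using H unfolding mpp_def by (elim conjE)
          have "indep_vars (\<lambda>_. count_space UNIV)
             (\<lambda>k \<omega>. (\<Sum>i<d. N i ((T \<circ> t) k i) \<omega>) - (\<Sum>i<d. N i ((T \<circ> t) (k - 1) i) \<omega>)) {1..m}"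
            using H2[rule_format, OF conjI[OF c1 c2]] .
          then show ?thesis by simp
        qed
        then show "indep_vars (\<lambda>_. count_space UNIV) (\<lambda>k \<omega>. N i (t k) \<omega> - N i (t (k - 1)) \<omega>) {1..m}"
          by (rule indep_vars_cong_space) (simp add: XT)
      next
        fix s t :: real assume st: "0 \<le> s" "s \<le> t"
        have "distr M (count_space UNIV) (\<lambda>\<omega>. (\<Sum>j<d. N j (T t j) \<omega>) - (\<Sum>j<d. N j (T s j) \<omega>))
            = distr M (count_space UNIV) (\<lambda>\<omega>. \<Sum>j<d. N j ((\<lambda>j. T t j - T s j) j) \<omega>)"
          using H st unfolding mpp_def by (simp add: vleT flip: T0)
        moreover have Td: "T t j - T s j = T (t - s) j" for j by (auto simp: T_def)
        ultimately have "distr M (count_space UNIV) (\<lambda>\<omega>. (\<Sum>j<d. N j (T t j) \<omega>) - (\<Sum>j<d. N j (T s j) \<omega>))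
            = distr M (count_space UNIV) (\<lambda>\<omega>. \<Sum>j<d. N j (T (t - s) j) \<omega>)" by (simp only: Td)
        moreover have "distr M (count_space UNIV) (\<lambda>\<omega>. (\<Sum>j<d. N j (T t j) \<omega>) - (\<Sum>j<d. N j (T s j) \<omega>))
            = distr M (count_space UNIV) (\<lambda>\<omega>. N i t \<omega> - N i s \<omega>)"
          by (intro distr_cong) (simp_all add: XT)
        moreover have "distr M (count_space UNIV) (\<lambda>\<omega>. \<Sum>j<d. N j (T (t - s) j) \<omega>)
            = distr M (count_space UNIV) (N i (t - s))"
          by (intro distr_cong) (simp_all add: XT)
        ultimately show "distr M (count_space UNIV) (\<lambda>\<omega>. N i t \<omega> - N i s \<omega>) = distr M (count_space UNIV) (N i (t - s))"
          by simp
      next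
        fix t :: real assume t: "0 \<le> t"
        have "poisson_rv M (\<lambda>\<omega>. \<Sum>j<d. N j (T t j) \<omega>) (vdot d L (T t))"
          using H t unfolding mpp_def by (simp add: vleT flip: T0)
        moreover have "vdot d L (T t) = L i * t"
        proof -
          have "vdot d L (T t) = (\<Sum>j<d. if j = i then L i * t else 0)"
            unfolding vdot_def T_def by (intro sum.cong) auto
          then show ?thesis using i by simp
        qed
        ultimately show "poisson_rv M (N i t) (L i * t)"
          by (auto intro: poisson_rv_cong simp: XT)
      qed
    qed
  next
    assume H: "\<forall>i<d. poisson_process M (L i) (N i)"
    have meas: "N i s \<in> measurable M (count_space UNIV)" if "i < d" "0 \<le> s" for i s
    proof -
      have "poisson_process M (L i) (N i)" using H that(1) by blast
      then have "poisson_rv M (N i s) (L i * s)" using that(2) by (rule pp_poisson)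
      then show ?thesis unfolding poisson_rv_def by blast
    qed
    have psum: "poisson_rv M (\<lambda>\<omega>. \<Sum>i<d. N i (a i) \<omega> - N i (b i) \<omega>) (\<Sum>i<d. L i * (a i - b i))"
      if ab: "\<And>i. i < d \<Longrightarrow> 0 \<le> b i" "\<And>i. i < d \<Longrightarrow> b i \<le> a i" for a b
    proof (rule poisson_sum)
      have a0: "0 \<le> a i" if "i < d" for i using ab(1)[OF that] ab(2)[OF that] by linarith
      show "indep_vars (\<lambda>_. count_space UNIV) (\<lambda>i \<omega>. N i (a i) \<omega> - N i (b i) \<omega>) {..<d}"
        by (rule evalind[OF a0 ab(1)])
      fix i assume i: "i \<in> {..<d}"
      then have "i < d" by simp
      have pp: "poisson_process M (L i) (N i)" using H \<open>i < d\<close> by blast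
      have f1: "poisson_rv M (N i (a i - b i)) (L i * (a i - b i))"
        using ab[OF \<open>i < d\<close>] by (intro pp_poisson[OF pp]) simp
      moreover have f2: "distr M (count_space UNIV) (\<lambda>\<omega>. N i (a i) \<omega> - N i (b i) \<omega>) = distr M (count_space UNIV) (N i (a i - b i))"
        using ab[OF \<open>i < d\<close>] by (intro pp_distr[OF pp])
      moreover have f3: "(\<lambda>\<omega>. N i (a i) \<omega> - N i (b i) \<omega>) \<in> measurable M (count_space UNIV)"
      proof -
        have [measurable]: "N i (a i) \<in> measurable M (count_space UNIV)" "N i (b i) \<in> measurable M (count_space UNIV)"
          using meas[OF \<open>i < d\<close> a0[OF \<open>i < d\<close>]] meas[OF \<open>i < d\<close> ab(1)[OF \<open>i < d\<close>]] by auto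
        show ?thesis by measurable
      qed
      show "poisson_rv M (\<lambda>\<omega>. N i (a i) \<omega> - N i (b i) \<omega>) (L i * (a i - b i))"
        by (rule poisson_distr_transfer[OF f1 f3 f2])
    qed simp
    have Xsub: "(\<Sum>i<d. N i (a i) \<omega>) - (\<Sum>i<d. N i (b i) \<omega>) = (\<Sum>i<d. N i (a i) \<omega> - N i (b i) \<omega>)"
      if "\<omega> \<in> space M" "\<And>i. i < d \<Longrightarrow> 0 \<le> b i" "\<And>i. i < d \<Longrightarrow> b i \<le> a i" for a b \<omega>
      using that by (intro sum_subtractf_nat[symmetric] Nmono) auto
    have ppos: "poisson_rv M (\<lambda>\<omega>. \<Sum>i<d. N i (a i) \<omega>) (vdot d L a)" if a: "\<And>i. i < d \<Longrightarrow> 0 \<le> a i" for a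
    proof -
      have "poisson_rv M (\<lambda>\<omega>. \<Sum>i<d. N i (a i) \<omega> - N i ((\<lambda>_. 0) i) \<omega>) (\<Sum>i<d. L i * (a i - (\<lambda>_. 0) i))"
        by (rule psum) (simp_all add: a)
      then have "poisson_rv M (\<lambda>\<omega>. \<Sum>i<d. N i (a i) \<omega>) (\<Sum>i<d. L i * (a i - (\<lambda>_. 0) i))"
        by (rule poisson_rv_cong) (intro sum.cong refl, simp add: N0)
      then show ?thesis unfolding vdot_def by simp
    qed
    show "mpp d M L (\<lambda>t \<omega>. \<Sum>i<d. N i (t i) \<omega>)"
      unfolding mpp_def
    proof (intro conjI allI impI)
      show "mcounting_process d M (\<lambda>t \<omega>. \<Sum>i<d. N i (t i) \<omega>)"
        unfolding mcounting_process_def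
      proof (intro ballI conjI allI impI)
        fix \<omega> assume \<omega>: "\<omega> \<in> space M"
        show "(\<Sum>i<d. N i ((\<lambda>_. 0) i) \<omega>) = 0" using N0[OF _ \<omega>] by simp
        fix s t :: "nat \<Rightarrow> real" assume "vle d (\<lambda>_. 0) s" "vle d s t"
        then have "0 \<le> s i" "s i \<le> t i" if "i < d" for i using that unfolding vle_def by auto
        then show "(\<Sum>i<d. N i (s i) \<omega>) \<le> (\<Sum>i<d. N i (t i) \<omega>)"
          by (intro sum_mono Nmono[OF _ \<omega>]) auto
      qed
    next
      fix s t assume st: "vle d (\<lambda>_. 0) s" "vle d s t"
      then have s0: "\<And>i. i < d \<Longrightarrow> 0 \<le> s i" and stle: "\<And>i. i < d \<Longrightarrow> s i \<le> t i"
        by (auto simp: vle_def)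
      have "distr M (count_space UNIV) (\<lambda>\<omega>. (\<Sum>i<d. N i (t i) \<omega>) - (\<Sum>i<d. N i (s i) \<omega>))
          = distr M (count_space UNIV) (\<lambda>\<omega>. \<Sum>i<d. N i (t i) \<omega> - N i (s i) \<omega>)"
        by (intro distr_cong) (simp_all add: Xsub s0 stle)
      also have "\<dots> = distr M (count_space UNIV) (\<lambda>\<omega>. \<Sum>i<d. N i (t i - s i) \<omega>)"
      proof (rule poisson_distr_eq)
        show "poisson_rv M (\<lambda>\<omega>. \<Sum>i<d. N i (t i) \<omega> - N i (s i) \<omega>) (\<Sum>i<d. L i * (t i - s i))"
          by (rule psum) (use s0 stle in auto)
        show "poisson_rv M (\<lambda>\<omega>. \<Sum>i<d. N i (t i - s i) \<omega>) (\<Sum>i<d. L i * (t i - s i))"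
        proof -
          have "0 \<le> t i - s i" if "i < d" for i using stle[OF that] by simp
          from ppos[of "\<lambda>i. t i - s i", OF this] show ?thesis unfolding vdot_def by simp
        qed
      qed
      finally show "distr M (count_space UNIV) (\<lambda>\<omega>. (\<Sum>i<d. N i (t i) \<omega>) - (\<Sum>i<d. N i (s i) \<omega>))
          = distr M (count_space UNIV) (\<lambda>\<omega>. \<Sum>i<d. N i ((\<lambda>i. t i - s i) i) \<omega>)" by simp
    next
      fix t assume "vle d (\<lambda>_. 0) t"
      then show "poisson_rv M (\<lambda>\<omega>. \<Sum>i<d. N i (t i) \<omega>) (vdot d L t)"
        by (intro ppos) (auto simp: vle_def)
    next
      fix m :: nat and t :: "nat \<Rightarrow> nat \<Rightarrow> real"
      assume tc: "t 0 = (\<lambda>_. 0) \<and> (\<forall>k\<in>{1..m}. vlt d (t (k - 1)) (t k))"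
      have le: "t (k - 1) i \<le> t k i" if "k \<in> {1..m}" "i < d" for k i
        using tc that by (auto simp: vlt_def vle_def)
      have nn: "0 \<le> t k i" if "k \<le> m" "i < d" for k i
        using that
      proof (induction k)
        case 0 then show ?case using tc by simp
      next
        case (Suc k)
        then have "0 \<le> t k i" by simp
        also have "t k i \<le> t (Suc k) i" using le[of "Suc k" i] Suc.prems by simp
        finally show ?case .
      qed
      define D where "D = (\<lambda>p \<omega>. N (fst p) (t (snd p) (fst p)) \<omega> - N (fst p) (t (snd p - 1) (fst p)) \<omega>)"
      let ?P = "{..<d} \<times> {1..m}"
      have Dmeas: "D p \<in> measurable M (count_space UNIV)" if pP: "p \<in> ?P" for p
      proof -
        obtain i k where p: "p = (i, k)" "i < d" "k \<in> {1..m}" using pP by (cases p) auto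
        have [measurable]: "N i (t k i) \<in> measurable M (count_space UNIV)" "N i (t (k - 1) i) \<in> measurable M (count_space UNIV)"
          using p by (auto intro!: meas nn)
        show ?thesis unfolding D_def p fst_conv snd_conv by measurable
      qed
      have indD: "indep_vars (\<lambda>_. count_space UNIV) D ?P"
      proof (rule indep_vars_from_fact)
        fix A :: "nat \<times> nat \<Rightarrow> nat set"
        define B where "B i = {x \<in> space (Pi\<^sub>M {0::real..} (\<lambda>_. count_space (UNIV::nat set))).
           \<forall>k\<in>{1..m}. x (t k i) - x (t (k - 1) i) \<in> A (i, k)}" for i
        have Bs: "B i \<in> sets (Pi\<^sub>M {0::real..} (\<lambda>_. count_space (UNIV::nat set)))" if "i < d" for i
        proof -
          have [measurable]: "t k i \<in> {0..}" "t (k - 1) i \<in> {0..}" if "k \<in> {1..m}" for k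
            using nn[of k i] nn[of "k - 1" i] \<open>i < d\<close> that by auto
          show ?thesis unfolding B_def by measurable
        qed
        have pre: "(\<lambda>\<omega>. restrict (\<lambda>t. N i t \<omega>) {0..}) -` B i \<inter> space M
            = {\<omega>\<in>space M. \<forall>k\<in>{1..m}. D (i, k) \<omega> \<in> A (i, k)}" if "i < d" for i
          using nn[OF _ that] by (auto simp: B_def D_def space_PiM)
        have "{\<omega>\<in>space M. \<forall>p\<in>?P. D p \<omega> \<in> A p}
            = (\<Inter>i\<in>{..<d}. (\<lambda>\<omega>. restrict (\<lambda>t. N i t \<omega>) {0..}) -` B i \<inter> space M)"
        proof (rule set_eqI)
          fix x
          have d0: "0 < d" using assms(2) by simp
          show "x \<in> {\<omega>\<in>space M. \<forall>p\<in>?P. D p \<omega> \<in> A p} \<longleftrightarrow>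
              x \<in> (\<Inter>i\<in>{..<d}. (\<lambda>\<omega>. restrict (\<lambda>t. N i t \<omega>) {0..}) -` B i \<inter> space M)"
            using pre d0 by auto
        qed
        then have "prob {\<omega>\<in>space M. \<forall>p\<in>?P. D p \<omega> \<in> A p}
            = (\<Prod>i\<in>{..<d}. prob ((\<lambda>\<omega>. restrict (\<lambda>t. N i t \<omega>) {0..}) -` B i \<inter> space M))"
        proof -
          have "prob (\<Inter>i\<in>{..<d}. (\<lambda>\<omega>. restrict (\<lambda>t. N i t \<omega>) {0..}) -` B i \<inter> space M)
            = (\<Prod>i\<in>{..<d}. prob ((\<lambda>\<omega>. restrict (\<lambda>t. N i t \<omega>) {0..}) -` B i \<inter> space M))"
          proof (rule indep_varsD[OF ind])
            have "0 \<in> {..<d}" using assms(2) by simp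
            then show "{..<d} \<noteq> {}" by blast
          qed (use Bs in auto)
          then show ?thesis using \<open>{\<omega>\<in>space M. \<forall>p\<in>?P. D p \<omega> \<in> A p} = _\<close> by simp
        qed
        also have "\<dots> = (\<Prod>i\<in>{..<d}. prob {\<omega>\<in>space M. \<forall>k\<in>{1..m}. D (i, k) \<omega> \<in> A (i, k)})"
          by (intro prod.cong refl) (simp add: pre)
        also have "\<dots> = (\<Prod>i\<in>{..<d}. \<Prod>k\<in>{1..m}. prob {\<omega>\<in>space M. D (i, k) \<omega> \<in> A (i, k)})"
        proof (intro prod.cong refl)
          fix i assume "i \<in> {..<d}"
          then have i: "i < d" by simp
          have "prob {\<omega>\<in>space M. \<forall>k\<in>{1..m}. N i (t k i) \<omega> - N i (t (k - 1) i) \<omega> \<in> A (i, k)}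
              = (\<Prod>k\<in>{1..m}. prob {\<omega>\<in>space M. N i (t k i) \<omega> - N i (t (k - 1) i) \<omega> \<in> A (i, k)})"
            using pp_incr_fact[of "L i" "N i" "\<lambda>k. t k i" m "\<lambda>k. A (i, k)"] H i tc le[OF _ i] by simp
          then show "prob {\<omega>\<in>space M. \<forall>k\<in>{1..m}. D (i, k) \<omega> \<in> A (i, k)}
              = (\<Prod>k\<in>{1..m}. prob {\<omega>\<in>space M. D (i, k) \<omega> \<in> A (i, k)})"
            by (simp add: D_def)
        qed
        also have "\<dots> = (\<Prod>p\<in>?P. prob {\<omega>\<in>space M. D p \<omega> \<in> A p})"
          by (simp add: prod.cartesian_product)
        finally show "prob {\<omega>\<in>space M. \<forall>p\<in>?P. D p \<omega> \<in> A p} = (\<Prod>p\<in>?P. prob {\<omega>\<in>space M. D p \<omega> \<in> A p})" .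
      qed (use Dmeas in auto)
      have "indep_vars (\<lambda>_. count_space UNIV) (\<lambda>k \<omega>. \<Sum>p\<in>{..<d} \<times> {k}. D p \<omega>) {1..m}"
        by (rule indep_vars_group_sum[OF indD]) (auto simp: disjoint_family_on_def)
      then show "indep_vars (\<lambda>_. count_space UNIV)
          (\<lambda>k \<omega>. (\<Sum>i<d. N i (t k i) \<omega>) - (\<Sum>i<d. N i (t (k - 1) i) \<omega>)) {1..m}"
      proof (rule indep_vars_cong_space)
        fix k \<omega> assume k: "k \<in> {1..m}" and \<omega>: "\<omega> \<in> space M"
        have "(\<Sum>p\<in>{..<d} \<times> {k}. D p \<omega>) = (\<Sum>i<d. D (i, k) \<omega>)"
        proof -
          have "{..<d} \<times> {k} = (\<lambda>i. (i, k)) ` {..<d}" by auto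
          moreover have "inj_on (\<lambda>i. (i, k)) {..<d}" by (auto simp: inj_on_def)
          ultimately show ?thesis by (simp add: sum.reindex)
        qed
        also have "\<dots> = (\<Sum>i<d. N i (t k i) \<omega> - N i (t (k - 1) i) \<omega>)" by (simp add: D_def)
        also have "\<dots> = (\<Sum>i<d. N i (t k i) \<omega>) - (\<Sum>i<d. N i (t (k - 1) i) \<omega>)"
          using k by (intro Xsub[symmetric] \<omega> nn le) auto
        finally show "(\<Sum>p\<in>{..<d} \<times> {k}. D p \<omega>) = (\<Sum>i<d. N i (t k i) \<omega>) - (\<Sum>i<d. N i (t (k - 1) i) \<omega>)" .
      qed
    qed
  qed
qed

end
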